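(* For $n\in\mathbb{N}^\star$ let $\phi_n(x)=\int_0^\pi e^{-2x\sin\eta}e^{2in\eta}\,\mathrm{d}\eta$ and $\varphi_n(x)=n\phi_n(nx)$. Then for every $x>0$ and $n\ge1$, $$\frac{4n^2}{4n^2+1}\frac{x}{1+x^2}\le\varphi_n(x)\le\frac{4n^2}{4n^2-1}\frac{x}{1+x^2}$$ and $$\frac{4n^2}{4n^2+1}\frac{x}{n^2+x^2}\le\phi_n(x)\le\frac{4n^2}{4n^2-1}\frac{x}{n^2+x^2}.$$ *)

theory Defs
  imports "HOL-Analysis.Analysis"
begin

definition phi :: "nat \<Rightarrow> real \<Rightarrow> complex" where
  "phi n x = integral {0..pi}
     (\<lambda>\<eta>. complex_of_real (exp (- 2 * x * sin \<eta>)) * exp (2 * \<i> * of_nat n * complex_of_real \<eta>))"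

definition varphi :: "nat \<Rightarrow> real \<Rightarrow> complex" where
  "varphi n x = of_nat n * phi n (real n * x)"

end

theory Submission
  imports Defs
begin

definition FF :: "nat \<Rightarrow> (real \<Rightarrow> real) \<Rightarrow> real \<Rightarrow> real" where
  "FF n g x = integral {0..pi} (\<lambda>t. g t * exp (- 2 * x * sin t) * cos (2 * real n * t))"

lemma FF_deriv:
  fixes g :: "real \<Rightarrow> real"
  assumes "continuous_on UNIV g"
  shows "(FF n g has_real_derivative FF n (\<lambda>t. -2 * sin t * g t) x) (at x)"
proof -
  have "((\<lambda>x. integral (cbox 0 pi) (\<lambda>t. g t * exp (- 2 * x * sin t) * cos (2 * real n * t)))
     has_field_derivative integral (cbox 0 pi) (\<lambda>t. -2 * sin t * g t * exp (- 2 * x * sin t) * cos (2 * real n * t))) (at x within UNIV)"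
  proof (rule leibniz_rule_field_derivative[where f = "\<lambda>x t. g t * exp (- 2 * x * sin t) * cos (2 * real n * t)"
        and fx = "\<lambda>x t. -2 * sin t * g t * exp (- 2 * x * sin t) * cos (2 * real n * t)"])
    fix x t :: real
    show "((\<lambda>x. g t * exp (- 2 * x * sin t) * cos (2 * real n * t)) has_field_derivative
        -2 * sin t * g t * exp (- 2 * x * sin t) * cos (2 * real n * t)) (at x within UNIV)"
      by (auto intro!: derivative_eq_intros simp: algebra_simps)
  next
    fix x :: real
    show "(\<lambda>t. g t * exp (- 2 * x * sin t) * cos (2 * real n * t)) integrable_on cbox 0 pi"
      by (intro integrable_continuous continuous_intros continuous_on_subset[OF assms]) auto
  next
    show "continuous_on (UNIV \<times> cbox 0 pi) (\<lambda>(x, t). -2 * sin t * g t * exp (- 2 * x * sin t) * cos (2 * real n * t))"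
      unfolding split_beta
      by (intro continuous_intros continuous_on_compose2[OF assms]) auto
  qed auto
  thus ?thesis unfolding FF_def by (simp add: mult.assoc)
qed

lemma FF_int:
  assumes "continuous_on UNIV g"
  shows "((\<lambda>t. g t * exp (- 2 * x * sin t) * cos (2 * real n * t)) has_integral FF n g x) {0..pi}"
  unfolding FF_def
  by (rule integrable_integral, intro integrable_continuous_real continuous_intros continuous_on_subset[OF assms]) auto


lemma dG: "((\<lambda>t. -(x/2) * cos t * exp(-2*x * sin t) * cos(2*N*t) + (N/2) * exp(-2*x * sin t) * sin(2*N*t)) has_real_derivative
   exp(-2*x * sin t) * cos(2*N*t) * ((x/2) * sin t + x^2 * (cos t)^2 + N^2)) (at t)"
  apply (intro derivative_eq_intros)
  apply (rule refl)+
  apply (simp add: power2_eq_square algebra_simps)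
  done

lemma alg: fixes s c x E C N :: real
  assumes "s^2 = 1 - c^2"
  shows "x^2 * ((-2 * s*(-2 * s*1))*E*C) + x*((-2 * s*1)*E*C) - 4*(N^2+x^2)*(1*E*C) = -4*(E*C*((x/2) * s + x^2*c^2 + N^2))"
proof -
  have "x^2 * ((-2 * s*(-2 * s*1))*E*C) = 4*x^2*E*C* s^2" by (simp add: power2_eq_square)
  also have "\<dots> = 4*x^2*E*C*(1-c^2)" using assms by simp
  finally show ?thesis by (simp add: algebra_simps power2_eq_square)
qed

lemma ODE:
  fixes x :: real and n :: nat
  shows "x^2 * FF n (\<lambda>t. -2 * sin t * (-2 * sin t * 1)) x + x * FF n (\<lambda>t. -2 * sin t * 1) x
        - 4 * (real n^2 + x^2) * FF n (\<lambda>t. 1) x = - 4 * x"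
proof -
  define G where "G t = -(x/2) * cos t * exp(-2*x * sin t) * cos(2*real n*t) + (real n/2) * exp(-2*x * sin t) * sin(2*real n*t)" for t
  define G' where "G' t = exp(-2*x * sin t) * cos(2*real n*t) * ((x/2) * sin t + x^2 * (cos t)^2 + real n^2)" for t
  have d: "(G has_vector_derivative G' t) (at t within {0..pi})" for t
    unfolding G_def G'_def has_real_derivative_iff_has_vector_derivative[symmetric]
    by (rule has_field_derivative_at_within[OF dG])
  have "(G' has_integral (G pi - G 0)) {0..pi}"
    by (rule fundamental_theorem_of_calculus) (use d in auto)
  moreover have "G pi - G 0 = x"
    unfolding G_def by simp
  ultimately have "(G' has_integral x) {0..pi}" by simp
  then have h1: "((\<lambda>t. -4 * G' t) has_integral (-4 * x)) {0..pi}"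
    by (rule has_integral_mult_right)
  have h2: "((\<lambda>t. x^2 * ((-2 * sin t * (-2 * sin t * 1)) * exp (- 2 * x * sin t) * cos (2 * real n * t))
      + x * ((-2 * sin t * 1) * exp (- 2 * x * sin t) * cos (2 * real n * t))
      - 4 * (real n^2 + x^2) * (1 * exp (- 2 * x * sin t) * cos (2 * real n * t)))
     has_integral (x^2 * FF n (\<lambda>t. -2 * sin t * (-2 * sin t * 1)) x + x * FF n (\<lambda>t. -2 * sin t * 1) x
        - 4 * (real n^2 + x^2) * FF n (\<lambda>t. 1) x)) {0..pi}"
    by (intro has_integral_diff has_integral_add has_integral_mult_right FF_int continuous_intros)
  have eq: "(\<lambda>t. x^2 * ((-2 * sin t * (-2 * sin t * 1)) * exp (- 2 * x * sin t) * cos (2 * real n * t))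
      + x * ((-2 * sin t * 1) * exp (- 2 * x * sin t) * cos (2 * real n * t))
      - 4 * (real n^2 + x^2) * (1 * exp (- 2 * x * sin t) * cos (2 * real n * t))) = (\<lambda>t. -4 * G' t)"
  proof
    fix t :: real
    have "(sin t)^2 = 1 - (cos t)^2" using sin_cos_squared_add[of t] by linarith
    from alg[OF this, of x "exp (- 2 * x * sin t)" "cos (2 * real n * t)" "real n"]
    show "x^2 * ((-2 * sin t * (-2 * sin t * 1)) * exp (- 2 * x * sin t) * cos (2 * real n * t))
      + x * ((-2 * sin t * 1) * exp (- 2 * x * sin t) * cos (2 * real n * t))
      - 4 * (real n^2 + x^2) * (1 * exp (- 2 * x * sin t) * cos (2 * real n * t)) = -4 * G' t"
      unfolding G'_def by (simp only: mult_1)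
  qed
  have "((\<lambda>t. -4 * G' t) has_integral (x^2 * FF n (\<lambda>t. -2 * sin t * (-2 * sin t * 1)) x + x * FF n (\<lambda>t. -2 * sin t * 1) x
        - 4 * (real n^2 + x^2) * FF n (\<lambda>t. 1) x)) {0..pi}" using h2 unfolding eq .
  from has_integral_unique[OF this h1] show ?thesis .
qed

lemma integrand_eq:
  "complex_of_real (exp (- 2 * x * sin t)) * exp (2 * \<i> * of_nat n * complex_of_real t)
   = complex_of_real (1 * exp (- 2 * x * sin t) * cos (2 * real n * t))
     + \<i> * complex_of_real (exp (- 2 * x * sin t) * sin (2 * real n * t))"
  by (simp add: complex_eq_iff Re_exp Im_exp)

lemma sin_part_zero:
  "integral {0..pi} (\<lambda>t. exp (- 2 * x * sin t) * sin (2 * real n * t)) = 0"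
proof -
  define g where "g t = exp (- 2 * x * sin t) * sin (2 * real n * t)" for t
  have refl: "g (pi - t) = - g t" for t
  proof -
    have "sin (2 * real n * (pi - t)) = sin (2 * real n * pi - 2 * real n * t)"
      by (simp add: algebra_simps)
    also have "\<dots> = - sin (2 * real n * t)" by (simp add: sin_diff)
    finally show ?thesis unfolding g_def by simp
  qed
  have eq: "(\<lambda>t. g (pi - t)) = (\<lambda>x. (\<lambda>s. g (pi + s)) (- x))" by simp
  have "integral {0..pi} (\<lambda>t. g (pi - t)) = integral {-0..-(-pi)} (\<lambda>x. (\<lambda>s. g (pi + s)) (- x))"
    by (simp only: eq minus_minus minus_zero)
  also have "\<dots> = integral {-pi..0} (\<lambda>s. g (pi + s))" by (rule Henstock_Kurzweil_Integration.integral_reflect_real[of 0 "-pi" "\<lambda>s. g (pi + s)"])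
  also have "\<dots> = integral {0..pi} g"
    using integral_shift_Icc_real[of "-pi" 0 g pi] by (simp add: comp_def)
  finally have "integral {0..pi} g = - integral {0..pi} g"
    unfolding refl by simp
  thus ?thesis unfolding g_def by simp
qed

lemma phi_eq: "phi n x = complex_of_real (FF n (\<lambda>t. 1) x)"
proof -
  have i1: "((\<lambda>t. 1 * exp (- 2 * x * sin t) * cos (2 * real n * t)) has_integral FF n (\<lambda>t. 1) x) {0..pi}"
    by (rule FF_int) (intro continuous_intros)
  have i2: "((\<lambda>t. exp (- 2 * x * sin t) * sin (2 * real n * t)) has_integral 0) {0..pi}"
  proof -
    have "(\<lambda>t. exp (- 2 * x * sin t) * sin (2 * real n * t)) integrable_on {0..pi}"
      by (intro integrable_continuous_interval continuous_intros)
    from integrable_integral[OF this] show ?thesis using sin_part_zero[of x n] by simp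
  qed
  have "((\<lambda>t. complex_of_real (1 * exp (- 2 * x * sin t) * cos (2 * real n * t))
     + \<i> * complex_of_real (exp (- 2 * x * sin t) * sin (2 * real n * t))) has_integral
     (complex_of_real (FF n (\<lambda>t. 1) x) + \<i> * complex_of_real 0)) {0..pi}"
    using has_integral_linear[OF i1 bounded_linear_of_real] has_integral_linear[OF i2 bounded_linear_of_real]
    by (intro has_integral_add has_integral_mult_right) (auto simp: comp_def)
  hence "((\<lambda>t. complex_of_real (exp (- 2 * x * sin t)) * exp (2 * \<i> * of_nat n * complex_of_real t)) has_integral
     complex_of_real (FF n (\<lambda>t. 1) x)) {0..pi}"
    unfolding integrand_eq by simp
  thus ?thesis unfolding phi_def by (rule integral_unique)
qed

lemma F_zero:
  assumes "n \<ge> 1"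
  shows "FF n (\<lambda>t. 1) 0 = 0"
proof -
  have N: "real n > 0" using assms by simp
  have d: "((\<lambda>t. sin (2 * real n * t) / (2 * real n)) has_vector_derivative cos (2 * real n * t)) (at t within {0..pi})" for t
    unfolding has_real_derivative_iff_has_vector_derivative[symmetric]
    using N by (auto intro!: derivative_eq_intros)
  have "((\<lambda>t. cos (2 * real n * t)) has_integral (sin (2 * real n * pi) / (2 * real n) - sin (2 * real n * 0) / (2 * real n))) {0..pi}"
    by (rule fundamental_theorem_of_calculus) (use d in auto)
  hence "((\<lambda>t. cos (2 * real n * t)) has_integral 0) {0..pi}" by simp
  thus ?thesis unfolding FF_def by (simp add: integral_unique)
qed

lemma sin_lb:
  fixes t :: real
  assumes "0 \<le> t" "t \<le> pi/2"
  shows "t/4 \<le> sin t"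
proof -
  have a: "\<bar>sin t - (\<Sum>m<3. sin_coeff m * t ^ m)\<bar> \<le> inverse (fact 3) * \<bar>t\<bar> ^ 3"
    by (rule Maclaurin_sin_bound)
  have b: "(\<Sum>m<3. sin_coeff m * t ^ m) = t"
    by (simp add: eval_nat_numeral sin_coeff_def)
  have c: "(fact 3::real) = 6" by (simp add: fact_numeral)
  have d: "\<bar>t\<bar> ^ 3 = t^3" using assms by simp
  have e0: "\<bar>sin t - t\<bar> \<le> inverse 6 * t^3" using a unfolding b c d .
  have e1: "inverse 6 * t^3 = t^3/6" by (simp add: inverse_eq_divide)
  have e: "\<bar>sin t - t\<bar> \<le> t^3/6" using e0 e1 by linarith
  have f: "t < 2" using assms pi_less_4 by linarith
  have g: "t * t \<le> 2 * 2" using assms f mult_mono[of t 2 t 2] by simp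
  have h: "t * (t * t) \<le> t * (2 * 2)" using assms g mult_left_mono by blast
  have i: "t^3 \<le> 4 * t" using h by (simp add: power3_eq_cube)
  show ?thesis using e i by linarith
qed

lemma exp_bound:
  fixes t x :: real
  assumes "0 \<le> t" "t \<le> pi" "x > 0"
  shows "exp (- 2 * x * sin t) \<le> exp (- x * t / 2) + exp (- x * (pi - t) / 2)"
proof (cases "t \<le> pi/2")
  case True
  have "t/4 \<le> sin t" using sin_lb assms True by simp
  hence "- 2 * x * sin t \<le> - x * t / 2" using assms by (simp add: mult_left_mono)
  hence "exp (- 2 * x * sin t) \<le> exp (- x * t / 2)" by simp
  thus ?thesis using exp_gt_zero[of "- x * t / 2"] exp_gt_zero[of "- x * (pi - t) / 2"] by linarith
next
  case False
  have "(pi - t)/4 \<le> sin (pi - t)" using sin_lb[of "pi - t"] assms False by simp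
  hence "(pi - t)/4 \<le> sin t" by simp
  hence "- 2 * x * sin t \<le> - x * (pi - t) / 2" using assms by (simp add: mult_left_mono)
  hence "exp (- 2 * x * sin t) \<le> exp (- x * (pi - t) / 2)" by simp
  thus ?thesis using exp_gt_zero[of "- x * t / 2"] exp_gt_zero[of "- x * (pi - t) / 2"] by linarith
qed

lemma F_bound:
  assumes "x > 0"
  shows "\<bar>FF n (\<lambda>t. 1) x\<bar> \<le> 4 / x"
proof -
  have x0: "x \<noteq> 0" using assms by simp
  define H where "H t = - 2 * exp (- x * t / 2) / x + 2 * exp (- x * (pi - t) / 2) / x" for t
  have d: "(H has_vector_derivative (exp (- x * t / 2) + exp (- x * (pi - t) / 2))) (at t within {0..pi})" for t
    unfolding has_real_derivative_iff_has_vector_derivative[symmetric] H_def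
    using x0 by (auto intro!: derivative_eq_intros simp: field_simps)
  have gi: "((\<lambda>t. exp (- x * t / 2) + exp (- x * (pi - t) / 2)) has_integral (H pi - H 0)) {0..pi}"
    by (rule fundamental_theorem_of_calculus) (use d in auto)
  have "H pi - H 0 = 4 / x - 4 * exp (- x * pi / 2) / x" unfolding H_def by (simp add: field_simps)
  also have "\<dots> \<le> 4 / x" using assms by simp
  finally have Hle: "H pi - H 0 \<le> 4 / x" .
  have "norm (integral {0..pi} (\<lambda>t. 1 * exp (- 2 * x * sin t) * cos (2 * real n * t)))
     \<le> integral {0..pi} (\<lambda>t. exp (- x * t / 2) + exp (- x * (pi - t) / 2))"
  proof (rule integral_norm_bound_integral)
    show "(\<lambda>t. 1 * exp (- 2 * x * sin t) * cos (2 * real n * t)) integrable_on {0..pi}"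
      by (intro integrable_continuous_interval continuous_intros)
    show "(\<lambda>t. exp (- x * t / 2) + exp (- x * (pi - t) / 2)) integrable_on {0..pi}"
      using gi by blast
    fix t assume t: "t \<in> {0..pi}"
    have "norm (1 * exp (- 2 * x * sin t) * cos (2 * real n * t)) \<le> exp (- 2 * x * sin t)"
      by (simp add: abs_mult mult_left_le)
    also have "\<dots> \<le> exp (- x * t / 2) + exp (- x * (pi - t) / 2)" using exp_bound t assms by simp
    finally show "norm (1 * exp (- 2 * x * sin t) * cos (2 * real n * t)) \<le> exp (- x * t / 2) + exp (- x * (pi - t) / 2)" .
  qed
  also have "\<dots> = H pi - H 0" using gi by (rule integral_unique)
  finally show ?thesis using Hle unfolding FF_def by simp
qed


lemma maxprin:
  fixes w wd wdd :: "real \<Rightarrow> real" and x :: real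
  assumes d1: "\<And>y. (w has_real_derivative wd y) (at y)"
    and d2: "\<And>y. (wd has_real_derivative wdd y) (at y)"
    and w0: "w 0 = 0"
    and lim: "\<And>e. e > 0 \<Longrightarrow> \<exists>M. \<forall>y\<ge>M. \<bar>w y\<bar> < e"
    and key: "\<And>y. y > 0 \<Longrightarrow> wd y = 0 \<Longrightarrow> w y > 0 \<Longrightarrow> wdd y > 0"
    and x: "x > 0"
  shows "w x \<le> 0"
proof (rule ccontr)
  assume "\<not> w x \<le> 0"
  hence wx: "w x > 0" by simp
  obtain M where M: "\<forall>y\<ge>M. \<bar>w y\<bar> < w x" using lim[OF wx] by blast
  define M' where "M' = max M (x+1)"
  have cont: "continuous_on {0..M'} w"
    using d1 by (meson DERIV_isCont continuous_at_imp_continuous_on)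
  obtain x0 where x0: "x0 \<in> {0..M'}" and mx: "\<forall>y\<in>{0..M'}. w y \<le> w x0"
    using continuous_attains_sup[OF compact_Icc _ cont] x unfolding M'_def by fastforce
  have "x \<in> {0..M'}" using x unfolding M'_def by auto
  hence g: "w x0 \<ge> w x" using mx by blast
  have "x0 \<noteq> 0" using g wx w0 by auto
  hence x0p: "x0 > 0" using x0 by auto
  have "\<bar>w M'\<bar> < w x" using M unfolding M'_def by simp
  hence "w M' < w x" by simp
  hence "x0 \<noteq> M'" using g by auto
  hence x0M: "x0 < M'" using x0 by auto
  have "wd x0 = 0"
  proof (rule DERIV_local_max[OF d1, of "min x0 (M' - x0)"])
    show "0 < min x0 (M' - x0)" using x0p x0M by auto
    show "\<forall>y. \<bar>x0 - y\<bar> < min x0 (M' - x0) \<longrightarrow> w y \<le> w x0"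
      using mx by (auto simp: abs_less_iff)
  qed
  moreover have "w x0 > 0" using g wx by auto
  ultimately have pos: "wdd x0 > 0" using key x0p by blast
  obtain d where d: "d > 0" "\<forall>h>0. h < d \<longrightarrow> wd x0 < wd (x0 + h)"
    using DERIV_pos_inc_right[OF d2 pos] by blast
  define h where "h = min (d/2) ((M' - x0)/2)"
  have h1: "h > 0" using d x0M unfolding h_def by auto
  have h2: "h < d" using d x0M unfolding h_def by auto
  have "h \<le> (M' - x0)/2" unfolding h_def by (rule min.cobounded2)
  hence h3: "x0 + h \<le> M'" using x0M by (simp add: field_simps)
  note h = h1 h2 h3
  obtain z where z: "x0 < z" "z < x0 + h" "w (x0 + h) - w x0 = (x0 + h - x0) * wd z"
    using MVT2[of x0 "x0 + h" w wd] d1 h by auto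
  have "wd z > 0" using d(2)[rule_format, of "z - x0"] z h \<open>wd x0 = 0\<close> by auto
  hence "h * wd z > 0" using h(1) by simp
  hence "w (x0 + h) > w x0" using z(3) by simp
  moreover have "x0 + h \<in> {0..M'}" using h x0p by auto
  ultimately show False using mx by fastforce
qed


lemma b_deriv:
  fixes N x :: real
  assumes "N \<ge> 1"
  shows "((\<lambda>x. x / (N^2 + x^2)) has_real_derivative (N^2 - x^2) / (N^2 + x^2)^2) (at x)"
proof -
  have D: "N^2 + x^2 \<noteq> 0" using assms by (smt (verit) power2_less_0 one_le_power)
  show ?thesis
    apply (intro derivative_eq_intros)
    apply (rule refl D)+
    using D by (simp add: field_simps power2_eq_square)
qed

lemma b1_deriv:
  fixes N x :: real
  assumes "N \<ge> 1"
  shows "((\<lambda>x. (N^2 - x^2) / (N^2 + x^2)^2) has_real_derivative (2*x^3 - 6*x*N^2) / (N^2 + x^2)^3) (at x)"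
proof -
  have D: "N^2 + x^2 \<noteq> 0" using assms by (smt (verit) power2_less_0 one_le_power)
  hence D2: "(N^2 + x^2)^2 \<noteq> 0" by simp
  show ?thesis
    apply (intro derivative_eq_intros)
    apply (rule refl D D2)+
    using D apply (simp add: field_simps)
    apply (simp add: eval_nat_numeral algebra_simps)
    done
qed

lemma poly5: "x * (N\<^sup>2 * D ^ 6) + 2 * (D ^ 5 * x ^ 5) = x * (x\<^sup>2 * D ^ 6) + (x * (D ^ 5 * N ^ 4) + x * (D ^ 5 * x ^ 4))" if DD: "D = N^2 + x^2" for D N x :: real
proof -
  have "x * N\<^sup>2 * D + 2 * x ^ 5 = x * x\<^sup>2 * D + x * N ^ 4 + x * x ^ 4"
    unfolding DD by (simp add: eval_nat_numeral algebra_simps)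
  hence "D^5 * (x * N\<^sup>2 * D + 2 * x ^ 5) = D^5 * (x * x\<^sup>2 * D + x * N ^ 4 + x * x ^ 4)" by simp
  thus ?thesis by (simp add: algebra_simps eval_nat_numeral)
qed
lemma q1: fixes x N :: real shows "x ^ 4 - 6 * x\<^sup>2 * N\<^sup>2 + N ^ 4 \<le> (N^2 + x^2)^2"
proof -
  have "(N^2 + x^2)^2 - (x ^ 4 - 6 * x\<^sup>2 * N\<^sup>2 + N ^ 4) = 8 * (x*N)^2" by (simp add: eval_nat_numeral algebra_simps)
  moreover have "0 \<le> 8 * (x*N)^2" by simp
  ultimately show ?thesis by linarith
qed
lemma q2: fixes x N :: real shows "- ((N^2 + x^2)^2) \<le> x ^ 4 - 6 * x\<^sup>2 * N\<^sup>2 + N ^ 4"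
proof -
  have "(x ^ 4 - 6 * x\<^sup>2 * N\<^sup>2 + N ^ 4) + (N^2 + x^2)^2 = 2 * (x^2 - N^2)^2" by (simp add: eval_nat_numeral algebra_simps)
  moreover have "0 \<le> 2 * (x^2 - N^2)^2" by simp
  ultimately show ?thesis by linarith
qed

lemma P_bounds:
  fixes N x :: real
  assumes "N \<ge> 1" "x > 0"
  defines "D \<equiv> N^2 + x^2"
  shows "x^2 * ((2*x^3 - 6*x*N^2) / D^3) + x * ((N^2 - x^2) / D^2) - 4 * D * (x / D) \<le> -4*x + x/N^2"
    and "-4*x - x/N^2 \<le> x^2 * ((2*x^3 - 6*x*N^2) / D^3) + x * ((N^2 - x^2) / D^2) - 4 * D * (x / D)"
proof -
  have N2: "N^2 \<ge> 1" using assms by (simp add: one_le_power)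
  have DN: "D \<ge> N^2" unfolding D_def by simp
  have Dp: "D > 0" using N2 DN by linarith
  have DD: "D = N^2 + x^2" by (simp add: D_def)
  define q where "q = x^4 - 6*x^2*N^2 + N^4"
  have eq: "x^2 * ((2*x^3 - 6*x*N^2) / D^3) + x * ((N^2 - x^2) / D^2) - 4 * D * (x / D) = x * (q / D^3) - 4*x"
    using Dp unfolding q_def apply (simp add: field_simps)
    by (rule poly5[OF DD])
  have q1: "q \<le> D^2" unfolding q_def DD by (rule q1)
  have q2: "- (D^2) \<le> q" unfolding q_def DD by (rule q2)
  have inv: "1 / D \<le> 1 / N^2"
  proof (rule divide_left_mono)
    have "N^2 > 0" using N2 by linarith
    show "0 < D * N^2" by (rule mult_pos_pos[OF Dp \<open>N^2 > 0\<close>])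
  qed (use DN in auto)
  have D3: "D^3 = D * D^2" by (simp add: eval_nat_numeral)
  have "q / D^3 \<le> D^2 / D^3" using q1 Dp by (simp add: divide_right_mono)
  also have "\<dots> = 1 / D" using Dp unfolding D3 by simp
  also have "\<dots> \<le> 1 / N^2" by (rule inv)
  finally have u: "q / D^3 \<le> 1 / N^2" .
  have "- (1 / N^2) \<le> - (1 / D)" using inv by simp
  also have "- (1/D) = - (D^2) / D^3" using Dp unfolding D3 by simp
  also have "\<dots> \<le> q / D^3" using q2 Dp by (intro divide_right_mono) auto
  finally have l: "- (1 / N^2) \<le> q / D^3" .
  have "x * (q / D^3) \<le> x * (1 / N^2)" by (rule mult_left_mono[OF u]) (use assms in simp)
  thus "x^2 * ((2*x^3 - 6*x*N^2) / D^3) + x * ((N^2 - x^2) / D^2) - 4 * D * (x / D) \<le> -4*x + x/N^2"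
    unfolding eq by simp
  have "x * (- (1 / N^2)) \<le> x * (q / D^3)" by (rule mult_left_mono[OF l]) (use assms in simp)
  thus "-4*x - x/N^2 \<le> x^2 * ((2*x^3 - 6*x*N^2) / D^3) + x * ((N^2 - x^2) / D^2) - 4 * D * (x / D)"
    unfolding eq by simp
qed


lemma cv_up: fixes M y :: real assumes "M \<ge> 1" shows "4*M/(4*M-1) * (-4*y + y/M) = -4*y"
proof -
  have a: "4*M - 1 \<noteq> 0" "M \<noteq> 0" using assms by auto
  have a3: "M*(M*4) - M \<noteq> 0" "M*(4*M-1) \<noteq> 0" using a by (auto simp: algebra_simps)
  have "M*(M*4) - M = M*(4*M-1)" by (simp add: algebra_simps)
  show ?thesis using a a3 by (simp add: field_simps)
qed
lemma cv_lo: fixes M y :: real assumes "M \<ge> 1" shows "4*M/(4*M+1) * (-4*y - y/M) = -4*y"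
proof -
  have a: "4*M + 1 \<noteq> 0" "M \<noteq> 0" using assms by auto
  have p: "0 \<le> M*(M*4)" using assms by simp
  have a3: "M + M*(M*4) \<noteq> 0" using assms p by linarith
  show ?thesis using a a3 by (simp add: field_simps)
qed

lemma key_upper:
  fixes y N F F1 F2 b b1 b2 c :: real
  assumes y: "y > 0" and N: "N \<ge> 1"
    and ode: "y^2 * F2 + y * F1 - 4 * (N^2 + y^2) * F = -4 * y"
    and P: "y^2 * b2 + y * b1 - 4 * (N^2 + y^2) * b \<le> -4 * y + y / N^2"
    and w1: "F1 - c * b1 = 0" and w: "F - c * b > 0"
    and c: "c = 4 * N^2 / (4 * N^2 - 1)"
  shows "F2 - c * b2 > 0"
proof -
  have N2: "N^2 \<ge> 1" using N by (simp add: one_le_power)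
  have cpos: "c > 0" unfolding c using N2 by (intro divide_pos_pos) auto
  have cv: "c * (-4 * y + y / N^2) = -4 * y" unfolding c using cv_up[OF N2] by simp
  have "c * (y^2 * b2 + y * b1 - 4 * (N^2 + y^2) * b) \<le> c * (-4 * y + y / N^2)"
    by (rule mult_left_mono[OF P]) (use cpos in simp)
  hence cP: "c * (y^2 * b2 + y * b1 - 4 * (N^2 + y^2) * b) \<le> -4 * y" using cv by linarith
  have E: "y^2 * (F2 - c * b2) - (-4 * y - c * (y^2 * b2 + y * b1 - 4 * (N^2 + y^2) * b) + 4 * (N^2 + y^2) * (F - c * b))
     = (y^2 * F2 + y * F1 - 4 * (N^2 + y^2) * F + 4 * y) - y * (F1 - c * b1)"
    by (simp add: algebra_simps)
  have "(y^2 * F2 + y * F1 - 4 * (N^2 + y^2) * F + 4 * y) - y * (F1 - c * b1) = 0" using ode w1 by simp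
  hence E2: "y^2 * (F2 - c * b2) = -4 * y - c * (y^2 * b2 + y * b1 - 4 * (N^2 + y^2) * b) + 4 * (N^2 + y^2) * (F - c * b)"
    using E by linarith
  have "y^2 \<ge> 0" by simp
  moreover have "4 * (N^2 + y^2) = 4 * N^2 + 4 * y^2" by (simp add: distrib_left)
  ultimately have Dp: "4 * (N^2 + y^2) > 0" using N2 by linarith
  have "4 * (N^2 + y^2) * (F - c * b) > 0" by (rule mult_pos_pos[OF Dp]) (use w in simp)
  hence "y^2 * (F2 - c * b2) > 0" using E2 cP by linarith
  thus ?thesis using y by (simp add: zero_less_mult_iff)
qed

lemma key_lower:
  fixes y N F F1 F2 b b1 b2 c :: real
  assumes y: "y > 0" and N: "N \<ge> 1"
    and ode: "y^2 * F2 + y * F1 - 4 * (N^2 + y^2) * F = -4 * y"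
    and P: "-4 * y - y / N^2 \<le> y^2 * b2 + y * b1 - 4 * (N^2 + y^2) * b"
    and w1: "c * b1 - F1 = 0" and w: "c * b - F > 0"
    and c: "c = 4 * N^2 / (4 * N^2 + 1)"
  shows "c * b2 - F2 > 0"
proof -
  have N2: "N^2 \<ge> 1" using N by (simp add: one_le_power)
  have cpos: "c > 0" unfolding c using N2 by (intro divide_pos_pos) auto
  have cv: "c * (-4 * y - y / N^2) = -4 * y" unfolding c using cv_lo[OF N2] by simp
  have "c * (-4 * y - y / N^2) \<le> c * (y^2 * b2 + y * b1 - 4 * (N^2 + y^2) * b)"
    by (rule mult_left_mono[OF P]) (use cpos in simp)
  hence cP: "-4 * y \<le> c * (y^2 * b2 + y * b1 - 4 * (N^2 + y^2) * b)" using cv by linarith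
  have E: "y^2 * (c * b2 - F2) - (4 * y + c * (y^2 * b2 + y * b1 - 4 * (N^2 + y^2) * b) + 4 * (N^2 + y^2) * (c * b - F))
     = - (y^2 * F2 + y * F1 - 4 * (N^2 + y^2) * F + 4 * y) - y * (c * b1 - F1)"
    by (simp add: algebra_simps)
  have "- (y^2 * F2 + y * F1 - 4 * (N^2 + y^2) * F + 4 * y) - y * (c * b1 - F1) = 0" using ode w1 by simp
  hence E2: "y^2 * (c * b2 - F2) = 4 * y + c * (y^2 * b2 + y * b1 - 4 * (N^2 + y^2) * b) + 4 * (N^2 + y^2) * (c * b - F)"
    using E by linarith
  have "y^2 \<ge> 0" by simp
  moreover have "4 * (N^2 + y^2) = 4 * N^2 + 4 * y^2" by (simp add: distrib_left)
  ultimately have Dp: "4 * (N^2 + y^2) > 0" using N2 by linarith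
  have "4 * (N^2 + y^2) * (c * b - F) > 0" by (rule mult_pos_pos[OF Dp]) (use w in simp)
  hence "y^2 * (c * b2 - F2) > 0" using E2 cP by linarith
  thus ?thesis using y by (simp add: zero_less_mult_iff)
qed

lemma tail_lemma:
  fixes w :: "real \<Rightarrow> real" and K e :: real
  assumes K: "K \<ge> 0" and bnd: "\<And>y. y > 0 \<Longrightarrow> \<bar>w y\<bar> \<le> K / y" and e: "e > 0"
  shows "\<exists>M. \<forall>y\<ge>M. \<bar>w y\<bar> < e"
proof (intro exI allI impI)
  fix y assume y: "y \<ge> (K + 1) / e"
  have Mp: "(K + 1) / e > 0" using K e by simp
  hence yp: "y > 0" using y by linarith
  have "K / y \<le> K / ((K + 1) / e)"
  proof (rule divide_left_mono)
    show "0 < y * ((K + 1) / e)" by (rule mult_pos_pos[OF yp Mp])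
  qed (use y K in auto)
  also have "\<dots> = K * e / (K + 1)" using K e by simp
  also have "\<dots> < e" using K e by (simp add: field_simps)
  finally show "\<bar>w y\<bar> < e" using bnd[OF yp] by linarith
qed

lemma b_le:
  fixes N y :: real
  assumes "y > 0"
  shows "0 \<le> y / (N^2 + y^2)" "y / (N^2 + y^2) \<le> 1 / y"
proof -
  show "0 \<le> y / (N^2 + y^2)" using assms by simp
  have p: "N^2 + y^2 > 0" using assms by (simp add: add_nonneg_pos)
  have "y * y \<le> 1 * (N^2 + y^2)" by (simp add: power2_eq_square)
  thus "y / (N^2 + y^2) \<le> 1 / y" using p assms by (simp add: divide_simps)
qed


lemma phi_bounds:
  fixes n :: nat and x :: real
  assumes n: "n \<ge> 1" and x: "x > 0"
  shows "(4 * real n ^ 2) / (4 * real n ^ 2 + 1) * (x / (real n ^ 2 + x ^ 2)) \<le> FF n (\<lambda>t. 1) x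
     \<and> FF n (\<lambda>t. 1) x \<le> (4 * real n ^ 2) / (4 * real n ^ 2 - 1) * (x / (real n ^ 2 + x ^ 2))"
proof -
  define N where "N = real n"
  have N: "N \<ge> 1" using n unfolding N_def by simp
  have N2: "N^2 \<ge> 1" using N by (simp add: one_le_power)
  define F where "F = FF n (\<lambda>t. 1)"
  define F1 where "F1 = FF n (\<lambda>t. -2 * sin t * 1)"
  define F2 where "F2 = FF n (\<lambda>t. -2 * sin t * (-2 * sin t * 1))"
  define b where "b = (\<lambda>y::real. y / (N^2 + y^2))"
  define b1 where "b1 = (\<lambda>y::real. (N^2 - y^2) / (N^2 + y^2)^2)"
  define b2 where "b2 = (\<lambda>y::real. (2*y^3 - 6*y*N^2) / (N^2 + y^2)^3)"
  have dF: "(F has_real_derivative F1 y) (at y)" for y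
    unfolding F_def F1_def by (rule FF_deriv) (intro continuous_intros)
  have dF1: "(F1 has_real_derivative F2 y) (at y)" for y
    unfolding F1_def F2_def by (rule FF_deriv) (intro continuous_intros)
  have db: "(b has_real_derivative b1 y) (at y)" for y
    unfolding b_def b1_def by (rule b_deriv[OF N])
  have db1: "(b1 has_real_derivative b2 y) (at y)" for y
    unfolding b1_def b2_def by (rule b1_deriv[OF N])
  have ode: "y^2 * F2 y + y * F1 y - 4 * (N^2 + y^2) * F y = -4 * y" for y
    unfolding F_def F1_def F2_def N_def by (rule ODE)
  have Pu: "y^2 * b2 y + y * b1 y - 4 * (N^2 + y^2) * b y \<le> -4 * y + y / N^2" if "y > 0" for y
    unfolding b_def b1_def b2_def using P_bounds(1)[OF N that] by simp
  have Pl: "-4 * y - y / N^2 \<le> y^2 * b2 y + y * b1 y - 4 * (N^2 + y^2) * b y" if "y > 0" for y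
    unfolding b_def b1_def b2_def using P_bounds(2)[OF N that] by simp
  have F0: "F 0 = 0" unfolding F_def by (rule F_zero[OF n])
  have b0: "b 0 = 0" unfolding b_def by simp
  have Fb: "\<bar>F y\<bar> \<le> 4 / y" if "y > 0" for y unfolding F_def by (rule F_bound[OF that])
  have bb: "0 \<le> b y" "b y \<le> 1 / y" if "y > 0" for y unfolding b_def using b_le[OF that] by auto
  define cU where "cU = 4 * N^2 / (4 * N^2 - 1)"
  define cL where "cL = 4 * N^2 / (4 * N^2 + 1)"
  have cU: "cU > 0" unfolding cU_def using N2 by (intro divide_pos_pos) auto
  have cL: "cL > 0" unfolding cL_def using N2 by (intro divide_pos_pos) auto
  have tail: "\<bar>w y\<bar> \<le> (4 + c) / y" if "y > 0" "c > 0" "w = (\<lambda>y. F y - c * b y) \<or> w = (\<lambda>y. c * b y - F y)" for w c y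
  proof -
    have "c * b y \<le> c * (1 / y)" by (rule mult_left_mono[OF bb(2)[OF that(1)]]) (use that(2) in simp)
    moreover have "c * b y \<ge> 0" using bb(1)[OF that(1)] that(2) by simp
    ultimately have "\<bar>c * b y\<bar> \<le> c / y" by simp
    moreover have "\<bar>w y\<bar> \<le> \<bar>F y\<bar> + \<bar>c * b y\<bar>" using that(3) by auto
    moreover have "(4 + c) / y = 4 / y + c / y" by (simp add: add_divide_distrib)
    ultimately show ?thesis using Fb[OF that(1)] by linarith
  qed
  have up: "F x - cU * b x \<le> 0"
  proof (rule maxprin[where w = "\<lambda>y. F y - cU * b y" and wd = "\<lambda>y. F1 y - cU * b1 y" and wdd = "\<lambda>y. F2 y - cU * b2 y"])
    show "((\<lambda>y. F y - cU * b y) has_real_derivative F1 y - cU * b1 y) (at y)" for y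
      by (intro DERIV_diff DERIV_cmult dF db)
    show "((\<lambda>y. F1 y - cU * b1 y) has_real_derivative F2 y - cU * b2 y) (at y)" for y
      by (intro DERIV_diff DERIV_cmult dF1 db1)
    show "F 0 - cU * b 0 = 0" using F0 b0 by simp
    show "\<exists>M. \<forall>y\<ge>M. \<bar>F y - cU * b y\<bar> < e" if "e > 0" for e
      by (rule tail_lemma[of "4 + cU"]) (use cU that tail[of _ cU "\<lambda>y. F y - cU * b y"] in auto)
    show "F2 y - cU * b2 y > 0" if "y > 0" "F1 y - cU * b1 y = 0" "F y - cU * b y > 0" for y
      by (rule key_upper[OF that(1) N ode Pu[OF that(1)] that(2) that(3) cU_def])
  qed (rule x)
  have lo: "cL * b x - F x \<le> 0"
  proof (rule maxprin[where w = "\<lambda>y. cL * b y - F y" and wd = "\<lambda>y. cL * b1 y - F1 y" and wdd = "\<lambda>y. cL * b2 y - F2 y"])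
    show "((\<lambda>y. cL * b y - F y) has_real_derivative cL * b1 y - F1 y) (at y)" for y
      by (intro DERIV_diff DERIV_cmult dF db)
    show "((\<lambda>y. cL * b1 y - F1 y) has_real_derivative cL * b2 y - F2 y) (at y)" for y
      by (intro DERIV_diff DERIV_cmult dF1 db1)
    show "cL * b 0 - F 0 = 0" using F0 b0 by simp
    show "\<exists>M. \<forall>y\<ge>M. \<bar>cL * b y - F y\<bar> < e" if "e > 0" for e
      by (rule tail_lemma[of "4 + cL"]) (use cL that tail[of _ cL "\<lambda>y. cL * b y - F y"] in auto)
    show "cL * b2 y - F2 y > 0" if "y > 0" "cL * b1 y - F1 y = 0" "cL * b y - F y > 0" for y
      by (rule key_lower[OF that(1) N ode Pl[OF that(1)] that(2) that(3) cL_def])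
  qed (rule x)
  show ?thesis using up lo unfolding cU_def cL_def b_def F_def N_def by simp
qed

theorem lemma3p5:
  fixes n :: nat and x :: real
  assumes "n \<ge> 1" and "x > 0"
  shows "varphi n x \<in> \<real>
     \<and> (4 * real n ^ 2) / (4 * real n ^ 2 + 1) * (x / (1 + x ^ 2)) \<le> Re (varphi n x)
     \<and> Re (varphi n x) \<le> (4 * real n ^ 2) / (4 * real n ^ 2 - 1) * (x / (1 + x ^ 2))
     \<and> phi n x \<in> \<real>
     \<and> (4 * real n ^ 2) / (4 * real n ^ 2 + 1) * (x / (real n ^ 2 + x ^ 2)) \<le> Re (phi n x)
     \<and> Re (phi n x) \<le> (4 * real n ^ 2) / (4 * real n ^ 2 - 1) * (x / (real n ^ 2 + x ^ 2))"
proof -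
  define N where "N = real n"
  have Np: "N > 0" using assms(1) unfolding N_def by simp
  have Nx: "N * x > 0" using Np assms(2) by simp
  have b1: "(4 * N ^ 2) / (4 * N ^ 2 + 1) * (x / (N ^ 2 + x ^ 2)) \<le> FF n (\<lambda>t. 1) x
     \<and> FF n (\<lambda>t. 1) x \<le> (4 * N ^ 2) / (4 * N ^ 2 - 1) * (x / (N ^ 2 + x ^ 2))"
    using phi_bounds[OF assms] unfolding N_def .
  have b2: "(4 * N ^ 2) / (4 * N ^ 2 + 1) * ((N * x) / (N ^ 2 + (N * x) ^ 2)) \<le> FF n (\<lambda>t. 1) (N * x)
     \<and> FF n (\<lambda>t. 1) (N * x) \<le> (4 * N ^ 2) / (4 * N ^ 2 - 1) * ((N * x) / (N ^ 2 + (N * x) ^ 2))"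
    using phi_bounds[OF assms(1) Nx[unfolded N_def]] unfolding N_def .
  have sc: "N * (c * ((N * x) / (N ^ 2 + (N * x) ^ 2))) = c * (x / (1 + x ^ 2))" for c
  proof -
    have "N ^ 2 + (N * x) ^ 2 = N^2 * (1 + x^2)" by (simp add: algebra_simps power_mult_distrib)
    hence "(N * x) / (N ^ 2 + (N * x) ^ 2) = (N * x) / (N^2 * (1 + x^2))" by simp
    also have "\<dots> = x / (N * (1 + x^2))" using Np by (simp add: power2_eq_square)
    finally show ?thesis using Np by simp
  qed
  have vp: "varphi n x = complex_of_real (N * FF n (\<lambda>t. 1) (N * x))"
    unfolding varphi_def phi_eq N_def by simp
  have "N * ((4 * N ^ 2) / (4 * N ^ 2 + 1) * ((N * x) / (N ^ 2 + (N * x) ^ 2))) \<le> N * FF n (\<lambda>t. 1) (N * x)"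
    by (rule mult_left_mono[OF conjunct1[OF b2]]) (use Np in simp)
  hence l2: "(4 * N ^ 2) / (4 * N ^ 2 + 1) * (x / (1 + x ^ 2)) \<le> N * FF n (\<lambda>t. 1) (N * x)"
    unfolding sc .
  have "N * FF n (\<lambda>t. 1) (N * x) \<le> N * ((4 * N ^ 2) / (4 * N ^ 2 - 1) * ((N * x) / (N ^ 2 + (N * x) ^ 2)))"
    by (rule mult_left_mono[OF conjunct2[OF b2]]) (use Np in simp)
  hence u2: "N * FF n (\<lambda>t. 1) (N * x) \<le> (4 * N ^ 2) / (4 * N ^ 2 - 1) * (x / (1 + x ^ 2))"
    unfolding sc .
  show ?thesis
    using b1 l2 u2 unfolding vp phi_eq N_def[symmetric] by (simp add: Reals_of_real)
qed

end
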